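(* For every braid $\beta$ on $n$ strands with associated permutation $w$, the Rouquier complex $T_\beta$ carries an operator $u$ of homological degree $-2$ and $q$-degree $4$ such that $$[d,u]=\sum_{a=1}^n\left(x_a+x'_{w(a)}\right)\xi_a,$$ where $d$ is the differential of $T_\beta$ and $\xi_a$ are the dot-sliding homotopies on $T_\beta$.
   Context: Let $R=\mathbb{C}[x_1,\dots,x_n]$ with $\deg x_i=q^2$. Let $B_i=R\otimes_{R^{(i\,i+1)}}R$, presented as $\mathbb{C}[x_1,\dots,x_n,x'_1,\dots,x'_n]$ modulo $x_i+x_{i+1}=x'_i+x'_{i+1}$, $x_ix_{i+1}=x'_ix'_{i+1}$, $x_j=x'_j$ ($j\ne i,i+1$); unprimed variables act on the left, primed on the right. Let $b_i:B_i\to R$ send $1\mapsto1$ and $b_i^*:qR\to B_i$ send $1\mapsto x_i-x'_{i+1}$. The Rouquier complexes are $T_i=[B_i\xrightarrow{b_i}R]$ and $T_i^{-1}=[qR\xrightarrow{b_i^*}B_i]$ (differentials of homological degree $+1$), and for $\beta=\sigma_{i_1}^{\epsilon_1}\cdots\sigma_{i_r}^{\epsilon_r}$, $T_\beta=T_{i_1}^{\epsilon_1}\otimes_R\cdots\otimes_R T_{i_r}^{\epsilon_r}$, where in a tensor product the primed variables denote the rightmost set of variables. Dot-sliding homotopies: on $T_i$ set $\xi_i=b_i^*$, $\xi_{i+1}=-b_i^*$ (maps from the $R$ term to the $B_i$ term, homological degree $-1$) and $\xi_j=0$ otherwise; on $T_i^{-1}$ set $\xi_i=b_i$, $\xi_{i+1}=-b_i$,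 $\xi_j=0$ otherwise. Then $[d,\xi_a]=x_a-x'_{s_i(a)}$. For braids $\beta,\gamma$ with permutations $v,w$, on $T_{\beta\gamma}=T_\beta\otimes T_\gamma$ set $\xi_a^{\beta\gamma}=\xi_a^\beta+\xi_{v(a)}^\gamma$ (each extended by the identity on the other factor), so that $[d,\xi_a]=x_a-x'_{w v(a)}$ for the permutation of $\beta\gamma$. *)

theory Defs
  imports Complex_Main "HOL-Library.Poly_Mapping"
begin

text \<open>Variable (j,a): column j (0 = leftmost/unprimed set, length of the braid word
  = rightmost/primed set), strand a in 1..n.\<close>

type_synonym mono = "(nat \<times> nat) \<Rightarrow>\<^sub>0 nat"
type_synonym mpoly = "mono \<Rightarrow>\<^sub>0 complex"

definition Var :: "nat \<Rightarrow> nat \<Rightarrow> mpoly" where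
  "Var j a = Poly_Mapping.single (Poly_Mapping.single (j, a) 1) 1"

definition Const :: "complex \<Rightarrow> mpoly" where
  "Const c = Poly_Mapping.single 0 c"

definition mdeg :: "mono \<Rightarrow> nat" where
  "mdeg m = (\<Sum>v\<in>Poly_Mapping.keys m. Poly_Mapping.lookup m v)"

definition in_ring :: "nat \<Rightarrow> nat \<Rightarrow> mpoly \<Rightarrow> bool" where
  "in_ring r n p \<longleftrightarrow> (\<forall>m\<in>Poly_Mapping.keys p. \<forall>v\<in>Poly_Mapping.keys m. fst v \<le> r \<and> 1 \<le> snd v \<and> snd v \<le> n)"

definition ideal_gen :: "mpoly set \<Rightarrow> mpoly set" where
  "ideal_gen G = {p. \<exists>F c. finite F \<and> F \<subseteq> G \<and> p = (\<Sum>g\<in>F. c g * g)}"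

text \<open>A braid word is a list of pairs (i, e): the generator sigma_i, with
  e = True for sigma_i and e = False for sigma_i^{-1}. Position j (1-based) of the
  word is the j-th tensor factor, sitting between columns j-1 and j.
  A term of the (expanded) tensor product T_beta is given by the set S of positions
  whose factor is B_i (the other positions carry R, resp. qR).\<close>

text \<open>relations of factor j with generator i (B_i if isB, else R resp. qR)\<close>
definition fac_rels :: "nat \<Rightarrow> nat \<Rightarrow> nat \<Rightarrow> bool \<Rightarrow> mpoly set" where
  "fac_rels n j i isB =
     (if isB then
        {Var (j-1) i + Var (j-1) (i+1) - Var j i - Var j (i+1),
         Var (j-1) i * Var (j-1) (i+1) - Var j i * Var j (i+1)}
        \<union> {Var (j-1) b - Var j b | b. b \<in> {1..n} \<and> b \<noteq> i \<and> b \<noteq> i+1}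
      else {Var (j-1) b - Var j b | b. b \<in> {1..n}})"

definition term_ideal :: "nat \<Rightarrow> (nat \<times> bool) list \<Rightarrow> nat set \<Rightarrow> mpoly set" where
  "term_ideal n ws S =
     ideal_gen (\<Union>j\<in>{1..length ws}. fac_rels n j (fst (ws ! (j-1))) (j \<in> S))"

text \<open>homological degree of a term: R in T_i sits in degree 1, qR in T_i^{-1} in degree -1,
  B_i in degree 0\<close>
definition hdeg :: "(nat \<times> bool) list \<Rightarrow> nat set \<Rightarrow> int" where
  "hdeg ws S = (\<Sum>j\<in>{1..length ws} - S. if snd (ws ! (j-1)) then 1 else -1)"

text \<open>q-degree of the generator 1 of a term (deg x = 2; the generator of qR has
  q-degree 2, so that b_i^* has q-degree 0)\<close>
definition qshift :: "(nat \<times> bool) list \<Rightarrow> nat set \<Rightarrow> int" where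
  "qshift ws S = (\<Sum>j\<in>{1..length ws} - S. if snd (ws ! (j-1)) then 0 else 2)"

definition qhomog :: "(nat \<times> bool) list \<Rightarrow> nat set \<Rightarrow> int \<Rightarrow> mpoly \<Rightarrow> bool" where
  "qhomog ws S k p \<longleftrightarrow> (\<forall>m\<in>Poly_Mapping.keys p. 2 * int (mdeg m) + qshift ws S = k)"

text \<open>Koszul sign for acting on factor j: (-1)^(homological degree of factors before j)\<close>
definition ksign :: "(nat \<times> bool) list \<Rightarrow> nat set \<Rightarrow> nat \<Rightarrow> mpoly" where
  "ksign ws S j = (-1) ^ card {k \<in> {1..<j}. k \<notin> S}"

definition stran :: "nat \<Rightarrow> nat \<Rightarrow> nat" where
  "stran i a = (if a = i then i+1 else if a = i+1 then i else a)"

fun braid_perm :: "(nat \<times> bool) list \<Rightarrow> nat \<Rightarrow> nat" where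
  "braid_perm [] = id"
| "braid_perm (x # ws) = braid_perm ws \<circ> stran (fst x)"

text \<open>An operator is given by its entries  f S' S : (term S) \<rightarrow> (term S'),
  acting on polynomial representatives.\<close>
type_synonym op = "nat set \<Rightarrow> nat set \<Rightarrow> mpoly \<Rightarrow> mpoly"

definition opcomp :: "nat \<Rightarrow> op \<Rightarrow> op \<Rightarrow> op" where
  "opcomp r f g S'' S p = (\<Sum>T\<in>Pow {1..r}. f S'' T (g T S p))"

definition rdiff :: "(nat \<times> bool) list \<Rightarrow> op" where
  "rdiff ws S' S p = (\<Sum>j\<in>{1..length ws}.
      let i = fst (ws ! (j-1)); e = snd (ws ! (j-1)) in
      if e \<and> j \<in> S \<and> S' = S - {j} then ksign ws S j * p
      else if \<not> e \<and> j \<notin> S \<and> S' = insert j S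
        then ksign ws S j * (Var (j-1) i - Var j (i+1)) * p
      else 0)"

text \<open>dot-sliding homotopy xi_a on T_beta: sum over factors j of xi^{(j)}_{p(a)},
  p the permutation of the first j-1 letters, with Koszul signs\<close>
definition dot_slide :: "(nat \<times> bool) list \<Rightarrow> nat \<Rightarrow> op" where
  "dot_slide ws a S' S p = (\<Sum>j\<in>{1..length ws}.
      let i = fst (ws ! (j-1)); e = snd (ws ! (j-1));
          c = braid_perm (take (j-1) ws) a;
          coef = (if c = i then 1 else if c = i+1 then -1 else 0 :: mpoly) in
      if e \<and> j \<notin> S \<and> S' = insert j S
        then ksign ws S j * coef * (Var (j-1) i - Var j (i+1)) * p
      else if \<not> e \<and> j \<in> S \<and> S' = S - {j} then ksign ws S j * coef * p
      else 0)"

definition bimod_hom :: "nat \<Rightarrow> (nat \<times> bool) list \<Rightarrow> nat set \<Rightarrow> nat set \<Rightarrow> (mpoly \<Rightarrow> mpoly) \<Rightarrow> bool" where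
  "bimod_hom n ws S' S f \<longleftrightarrow>
     (let r = length ws; I = term_ideal n ws S'; R = {p. in_ring r n p} in
      (\<forall>p\<in>R. f p \<in> R) \<and>
      (\<forall>p\<in>R. p \<in> term_ideal n ws S \<longrightarrow> f p \<in> I) \<and>
      (\<forall>p\<in>R. \<forall>q\<in>R. f (p + q) - f p - f q \<in> I) \<and>
      (\<forall>c. \<forall>p\<in>R. f (Const c * p) - Const c * f p \<in> I) \<and>
      (\<forall>a\<in>{1..n}. \<forall>p\<in>R. f (Var 0 a * p) - Var 0 a * f p \<in> I
                        \<and> f (Var r a * p) - Var r a * f p \<in> I))"

end

theory Submission
  imports Defs
begin

interpretation rm: module "(*) :: mpoly \<Rightarrow> mpoly \<Rightarrow> mpoly"
  by standard (simp_all add: algebra_simps)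

lemma ideal_gen_span: "ideal_gen G = rm.span G"
proof (rule set_eqI)
  fix p
  show "p \<in> ideal_gen G \<longleftrightarrow> p \<in> rm.span G"
    unfolding ideal_gen_def rm.span_explicit mem_Collect_eq
  proof
    assume "\<exists>F c. finite F \<and> F \<subseteq> G \<and> p = (\<Sum>g\<in>F. c g * g)"
    then obtain F c where "finite F" "F \<subseteq> G" "p = (\<Sum>g\<in>F. c g * g)" by blast
    then show "\<exists>t ra. p = (\<Sum>a\<in>t. ra a * a) \<and> finite t \<and> t \<subseteq> G" by blast
  next
    assume "\<exists>t ra. p = (\<Sum>a\<in>t. ra a * a) \<and> finite t \<and> t \<subseteq> G"
    then obtain t ra where "p = (\<Sum>a\<in>t. ra a * a)" "finite t" "t \<subseteq> G" by blast
    then show "\<exists>F c. finite F \<and> F \<subseteq> G \<and> p = (\<Sum>g\<in>F. c g * g)" by blast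
  qed
qed


lemma span_mult: "p \<in> rm.span G \<Longrightarrow> c * p \<in> rm.span G"
  by (rule rm.span_scale)

lemma span_mult_sub:
  assumes "\<And>g. g \<in> G \<Longrightarrow> c * g \<in> rm.span H" and "p \<in> rm.span G"
  shows "c * p \<in> rm.span H"
proof -
  have "\<exists>t rr. p = (\<Sum>a\<in>t. rr a * a) \<and> finite t \<and> t \<subseteq> G"
    using assms(2) unfolding rm.span_explicit mem_Collect_eq .
  then obtain t rr where t: "p = (\<Sum>a\<in>t. rr a * a)" "finite t" "t \<subseteq> G"
    by (elim exE conjE)
  have e: "c * p = (\<Sum>a\<in>t. rr a * (c * a))" unfolding t(1) sum_distrib_left
    by (rule sum.cong[OF refl]) (rule mult.left_commute)
  have "(\<Sum>a\<in>t. rr a * (c * a)) \<in> rm.span H"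
  proof (rule rm.span_sum)
    fix a assume a: "a \<in> t"
    have "a \<in> G" using t(3) a by (rule subsetD)
    then have "c * a \<in> rm.span H" by (rule assms(1))
    then show "rr a * (c * a) \<in> rm.span H" by (rule rm.span_scale)
  qed
  then show ?thesis unfolding e .
qed

lemma in_ring_iff: "in_ring r n (p::mpoly) \<longleftrightarrow> (\<forall>m\<in>Poly_Mapping.keys p. Poly_Mapping.keys m \<subseteq> {v. fst v \<le> r \<and> 1 \<le> snd v \<and> snd v \<le> n})"
  unfolding in_ring_def by blast

lemma keys_add_nat: "Poly_Mapping.keys ((a::mono) + b) \<subseteq> Poly_Mapping.keys a \<union> Poly_Mapping.keys b"
  by (rule keys_add)

lemma in_ring_add: "in_ring r n p \<Longrightarrow> in_ring r n q \<Longrightarrow> in_ring r n (p + q)"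
  unfolding in_ring_iff using keys_add[of p q] by (meson subsetD Un_iff)

lemma in_ring_uminus: "in_ring r n p \<Longrightarrow> in_ring r n (- p)"
  unfolding in_ring_iff by simp

lemma in_ring_diff: "in_ring r n p \<Longrightarrow> in_ring r n q \<Longrightarrow> in_ring r n (p - q)"
  using in_ring_add[of r n p "-q"] in_ring_uminus by simp

lemma in_ring_mult: "in_ring r n p \<Longrightarrow> in_ring r n q \<Longrightarrow> in_ring r n (p * q)"
  unfolding in_ring_iff
proof
  fix m assume hp: "\<forall>m\<in>Poly_Mapping.keys p. Poly_Mapping.keys m \<subseteq> {v. fst v \<le> r \<and> 1 \<le> snd v \<and> snd v \<le> n}"
    and hq: "\<forall>m\<in>Poly_Mapping.keys q. Poly_Mapping.keys m \<subseteq> {v. fst v \<le> r \<and> 1 \<le> snd v \<and> snd v \<le> n}"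
    and m: "m \<in> Poly_Mapping.keys (p * q)"
  then obtain a b where "m = a + b" "a \<in> Poly_Mapping.keys p" "b \<in> Poly_Mapping.keys q" using keys_mult[of p q] by blast
  then show "Poly_Mapping.keys m \<subseteq> {v. fst v \<le> r \<and> 1 \<le> snd v \<and> snd v \<le> n}"
  proof -
    have "Poly_Mapping.keys a \<subseteq> {v. fst v \<le> r \<and> 1 \<le> snd v \<and> snd v \<le> n}" using hp \<open>a \<in> _\<close> by simp
    moreover have "Poly_Mapping.keys b \<subseteq> {v. fst v \<le> r \<and> 1 \<le> snd v \<and> snd v \<le> n}" using hq \<open>b \<in> Poly_Mapping.keys q\<close> by simp
    ultimately show ?thesis using keys_add[of a b] \<open>m = a + b\<close> by (meson order_trans le_sup_iff)
  qed
qed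

lemma in_ring_0: "in_ring r n 0" unfolding in_ring_def by simp
lemma in_ring_1: "in_ring r n 1" unfolding in_ring_def by simp

lemma in_ring_sum: "(\<And>x. x \<in> A \<Longrightarrow> in_ring r n (f x)) \<Longrightarrow> in_ring r n (sum f A)"
  by (induct A rule: infinite_finite_induct) (auto intro: in_ring_0 in_ring_add)

lemma in_ring_pow: "in_ring r n p \<Longrightarrow> in_ring r n (p ^ k)"
  by (induct k) (auto intro: in_ring_1 in_ring_mult)

lemma in_ring_Var: "j \<le> r \<Longrightarrow> 1 \<le> b \<Longrightarrow> b \<le> n \<Longrightarrow> in_ring r n (Var j b)"
  unfolding in_ring_def Var_def by simp

lemma in_ring_Const: "in_ring r n (Const c)"
  unfolding in_ring_def Const_def by simp

definition hom :: "nat \<Rightarrow> mpoly \<Rightarrow> bool" where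
  "hom d p \<longleftrightarrow> (\<forall>m\<in>Poly_Mapping.keys p. mdeg m = d)"

lemma mdeg_sum_sup: "finite K \<Longrightarrow> Poly_Mapping.keys m \<subseteq> K \<Longrightarrow> mdeg m = (\<Sum>v\<in>K. Poly_Mapping.lookup m v)"
  unfolding mdeg_def by (rule sum.mono_neutral_left) (auto simp: in_keys_iff)

lemma mdeg_add: "mdeg (a + b) = mdeg a + mdeg b"
proof -
  let ?K = "Poly_Mapping.keys a \<union> Poly_Mapping.keys b"
  have f: "finite ?K" by simp
  have "mdeg (a + b) = (\<Sum>v\<in>?K. Poly_Mapping.lookup (a + b) v)"
    using keys_add[of a b] by (intro mdeg_sum_sup f) auto
  also have "\<dots> = (\<Sum>v\<in>?K. Poly_Mapping.lookup a v) + (\<Sum>v\<in>?K. Poly_Mapping.lookup b v)"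
    by (simp add: lookup_add sum.distrib)
  also have "\<dots> = mdeg a + mdeg b"
    by (subst (1 2) mdeg_sum_sup[OF f]) auto
  finally show ?thesis .
qed

lemma mdeg_0: "mdeg 0 = 0" unfolding mdeg_def by simp
lemma mdeg_single: "mdeg (Poly_Mapping.single v 1) = 1" unfolding mdeg_def by simp

lemma hom_0: "hom d 0" unfolding hom_def by simp
lemma hom_1: "hom 0 1" unfolding hom_def by (simp add: mdeg_0)
lemma hom_Var: "hom 1 (Var j b)" unfolding hom_def Var_def by (simp add: mdeg_def)
lemma hom_add: "hom d p \<Longrightarrow> hom d q \<Longrightarrow> hom d (p + q)"
  unfolding hom_def using keys_add[of p q] by blast
lemma hom_uminus: "hom d p \<Longrightarrow> hom d (- p)" unfolding hom_def by simp
lemma hom_diff: "hom d p \<Longrightarrow> hom d q \<Longrightarrow> hom d (p - q)"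
  using hom_add[of d p "-q"] hom_uminus by simp
lemma hom_mult: "hom d1 p \<Longrightarrow> hom d2 q \<Longrightarrow> hom (d1 + d2) (p * q)"
  unfolding hom_def
proof
  fix m assume hp: "\<forall>m\<in>Poly_Mapping.keys p. mdeg m = d1" and hq: "\<forall>m\<in>Poly_Mapping.keys q. mdeg m = d2"
    and m: "m \<in> Poly_Mapping.keys (p * q)"
  then obtain a b where "m = a + b" "a \<in> Poly_Mapping.keys p" "b \<in> Poly_Mapping.keys q" using keys_mult[of p q] by blast
  then show "mdeg m = d1 + d2" using hp hq by (simp add: mdeg_add)
qed
lemma hom_pow0: "hom 0 p \<Longrightarrow> hom 0 (p ^ k)"
proof (induct k)
  case 0 then show ?case by (simp add: hom_1)
next
  case (Suc k) then show ?case using hom_mult[of 0 p 0 "p ^ k"] by simp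
qed
lemma hom_sum: "(\<And>x. x \<in> A \<Longrightarrow> hom d (f x)) \<Longrightarrow> hom d (sum f A)"
  by (induct A rule: infinite_finite_induct) (auto intro: hom_0 hom_add)


lemma ring_sq1: "(s::'a::comm_ring_1) * s = 1 \<Longrightarrow> s * a * (s * b) = a * b"
proof -
  assume "s * s = 1"
  then have "s * a * (s * b) = (s * s) * (a * b)" by (simp add: algebra_simps)
  then show ?thesis using \<open>s * s = 1\<close> by simp
qed

lemma ring_anti: "(s::'a::comm_ring_1) * a * (t * b) + t * b * (s * a) = 0 \<longleftrightarrow> 2 * (s*t*a*b) = 0"
  by (simp add: algebra_simps)

locale bw =
  fixes n :: nat and ws :: "(nat \<times> bool) list"
  assumes wf: "\<forall>x\<in>set ws. 1 \<le> fst x \<and> fst x < n"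
begin

abbreviation "r \<equiv> length ws"
abbreviation "PP \<equiv> Pow {1..r}"

definition gi :: "nat \<Rightarrow> nat" where "gi j = fst (ws ! (j-1))"
definition ge :: "nat \<Rightarrow> bool" where "ge j = snd (ws ! (j-1))"
definition kap :: "nat \<Rightarrow> mpoly" where "kap j = Var (j-1) (gi j) - Var j (gi j + 1)"
definition cf :: "nat \<Rightarrow> nat \<Rightarrow> mpoly" where
  "cf j b = (if b = gi j then 1 else if b = gi j + 1 then -1 else 0)"
definition loc :: "nat \<Rightarrow> mpoly \<Rightarrow> mpoly \<Rightarrow> nat set \<Rightarrow> nat set \<Rightarrow> mpoly" where
  "loc j c0 c1 S' S = (if j \<in> S \<and> S' = S - {j} then ksign ws S j * c1
     else if j \<notin> S \<and> S' = insert j S then ksign ws S j * c0 else 0)"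
definition Dl :: "nat \<Rightarrow> nat set \<Rightarrow> nat set \<Rightarrow> mpoly" where
  "Dl j = loc j (if ge j then 0 else kap j) (if ge j then 1 else 0)"
definition Xl :: "nat \<Rightarrow> nat \<Rightarrow> nat set \<Rightarrow> nat set \<Rightarrow> mpoly" where
  "Xl j b = loc j (if ge j then cf j b * kap j else 0) (if ge j then 0 else cf j b)"
definition mm :: "(nat set \<Rightarrow> nat set \<Rightarrow> mpoly) \<Rightarrow> (nat set \<Rightarrow> nat set \<Rightarrow> mpoly) \<Rightarrow> nat set \<Rightarrow> nat set \<Rightarrow> mpoly" where
  "mm M N S'' S = (\<Sum>T\<in>PP. M S'' T * N T S)"
definition Dm :: "nat set \<Rightarrow> nat set \<Rightarrow> mpoly" where
  "Dm S' S = (\<Sum>j\<in>{1..r}. Dl j S' S)"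
definition cp :: "nat \<Rightarrow> nat \<Rightarrow> nat" where "cp j a = braid_perm (take (j-1) ws) a"
definition Xi :: "nat \<Rightarrow> nat set \<Rightarrow> nat set \<Rightarrow> mpoly" where
  "Xi a S' S = (\<Sum>j\<in>{1..r}. Xl j (cp j a) S' S)"
definition U :: "nat set \<Rightarrow> nat set \<Rightarrow> mpoly" where
  "U S' S = (\<Sum>a\<in>{1..n}. \<Sum>k\<in>{1..r}. \<Sum>j\<in>{1..<k}. mm (Xl j (cp j a)) (Xl k (cp k a)) S' S)"
definition Gs :: "nat set \<Rightarrow> mpoly set" where
  "Gs S = (\<Union>j\<in>{1..r}. fac_rels n j (gi j) (j \<in> S))"
definition Ide :: "nat set \<Rightarrow> mpoly set" where "Ide S = rm.span (Gs S)"

lemma term_ideal_eq: "term_ideal n ws S = Ide S"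
  unfolding term_ideal_def Ide_def Gs_def gi_def ideal_gen_span by (rule refl)

lemma gi_bounds: "j \<in> {1..r} \<Longrightarrow> 1 \<le> gi j \<and> gi j < n"
proof -
  assume j: "j \<in> {1..r}"
  then have "ws ! (j-1) \<in> set ws" by (intro nth_mem) auto
  then show ?thesis using wf unfolding gi_def by blast
qed

lemma rdiff_eq: "rdiff ws S' S p = Dm S' S * p"
  unfolding rdiff_def Dm_def sum_distrib_right
proof (rule sum.cong[OF refl])
  fix j
  show "(let i = fst (ws ! (j - 1)); e = snd (ws ! (j - 1))
          in if e \<and> j \<in> S \<and> S' = S - {j} then ksign ws S j * p
             else if \<not> e \<and> j \<notin> S \<and> S' = insert j S then ksign ws S j * (Var (j - 1) i - Var j (i + 1)) * p else 0) =
        Dl j S' S * p"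
    unfolding Let_def Dl_def loc_def kap_def gi_def ge_def
    by (cases "snd (ws ! (j - 1))"; cases "j \<in> S"; simp)
qed

lemma dot_slide_eq: "dot_slide ws a S' S p = Xi a S' S * p"
  unfolding dot_slide_def Xi_def sum_distrib_right Let_def
  apply (rule sum.cong[OF refl])
  apply (simp only: Xl_def loc_def kap_def gi_def ge_def cf_def cp_def)
  apply (cases "snd (ws ! (j - 1))"; cases "j \<in> S")
  apply simp_all
  done

lemma opcomp_eq: "opcomp r (\<lambda>S' S p. M S' S * p) (\<lambda>S' S p. N S' S * p) S'' S p = mm M N S'' S * p"
  unfolding opcomp_def mm_def sum_distrib_right by (rule sum.cong[OF refl]) (rule mult.assoc[symmetric])

lemma ksign_sq: "ksign ws S j * ksign ws S j = 1"
  unfolding ksign_def power_mult_distrib[symmetric] by simp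

lemma ksign_insert_ge: "j \<le> k \<Longrightarrow> ksign ws (insert k S) j = ksign ws S j"
proof -
  assume "j \<le> k"
  then have "{l \<in> {1..<j}. l \<notin> insert k S} = {l \<in> {1..<j}. l \<notin> S}" by auto
  then show ?thesis unfolding ksign_def by simp
qed

lemma ksign_remove_ge: "j \<le> k \<Longrightarrow> ksign ws (S - {k}) j = ksign ws S j"
proof -
  assume "j \<le> k"
  then have "{l \<in> {1..<j}. l \<notin> S - {k}} = {l \<in> {1..<j}. l \<notin> S}" by auto
  then show ?thesis unfolding ksign_def by simp
qed

lemma ksign_insert_lt: "1 \<le> k \<Longrightarrow> k < j \<Longrightarrow> k \<notin> S \<Longrightarrow> ksign ws (insert k S) j = - ksign ws S j"
proof -
  assume a: "1 \<le> k" "k < j" "k \<notin> S"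
  have "{l \<in> {1..<j}. l \<notin> S} = insert k {l \<in> {1..<j}. l \<notin> insert k S}" using a by auto
  then have "card {l \<in> {1..<j}. l \<notin> S} = Suc (card {l \<in> {1..<j}. l \<notin> insert k S})" by simp
  then show ?thesis unfolding ksign_def by simp
qed

lemma ksign_remove_lt: "1 \<le> k \<Longrightarrow> k < j \<Longrightarrow> k \<in> S \<Longrightarrow> ksign ws (S - {k}) j = - ksign ws S j"
proof -
  assume a: "1 \<le> k" "k < j" "k \<in> S"
  have "ksign ws (insert k (S - {k})) j = - ksign ws (S - {k}) j" using a by (intro ksign_insert_lt) auto
  moreover have "insert k (S - {k}) = S" using a by auto
  ultimately show ?thesis by simp
qed

end

lemma ring_sq2: "(s::'a::comm_ring_1) * s = 1 \<Longrightarrow> t * t = 1 \<Longrightarrow> (- s * a) * (t * b) + (t * b) * (s * a) = 0"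
  by (simp add: algebra_simps)

lemma ring_gen_anti: "(if P then - s * a else 0) * (t * b) + (if P then t * b else 0) * ((s::'a::comm_ring_1) * a) = 0"
  by (cases P) (simp_all add: algebra_simps)

context bw begin

lemma mm_loc_right:
  assumes k: "k \<in> {1..r}" and S: "S \<in> PP"
  shows "mm M (loc k d0 d1) S'' S = (if k \<in> S then M S'' (S - {k}) * (ksign ws S k * d1)
      else M S'' (insert k S) * (ksign ws S k * d0))"
proof (cases "k \<in> S")
  case True
  have "mm M (loc k d0 d1) S'' S = (\<Sum>T\<in>PP. if T = S - {k} then M S'' T * (ksign ws S k * d1) else 0)"
    unfolding mm_def loc_def using True by (intro sum.cong refl) simp
  also have "\<dots> = M S'' (S - {k}) * (ksign ws S k * d1)"
  proof -
    have "S - {k} \<in> PP" using S by blast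
    then show ?thesis by (simp add: sum.delta)
  qed
  finally show ?thesis using True by simp
next
  case False
  have "mm M (loc k d0 d1) S'' S = (\<Sum>T\<in>PP. if T = insert k S then M S'' T * (ksign ws S k * d0) else 0)"
    unfolding mm_def loc_def using False by (intro sum.cong refl) simp
  also have "\<dots> = M S'' (insert k S) * (ksign ws S k * d0)"
  proof -
    have "insert k S \<in> PP" using S k by blast
    then show ?thesis by (simp add: sum.delta)
  qed
  finally show ?thesis using False by simp
qed

lemma loc_same:
  assumes j: "j \<in> {1..r}" and S: "S \<in> PP"
  shows "mm (loc j c0 c1) (loc j d0 d1) S'' S = (if S'' = S then (if j \<in> S then c0 * d1 else c1 * d0) else 0)"
proof (cases "j \<in> S")
  case True
  have e: "insert j (S - {j}) = S" using True by blast
  have "loc j c0 c1 S'' (S - {j}) = (if S'' = S then ksign ws S j * c0 else 0)"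
    unfolding loc_def using True e ksign_remove_ge[of j j S] by simp
  then show ?thesis unfolding mm_loc_right[OF j S] using True ring_sq1[OF ksign_sq[of S j]] by simp
next
  case False
  have e: "insert j S - {j} = S" using False by blast
  have "loc j c0 c1 S'' (insert j S) = (if S'' = S then ksign ws S j * c1 else 0)"
    unfolding loc_def using False e ksign_insert_ge[of j j S] by auto
  then show ?thesis unfolding mm_loc_right[OF j S] using False ring_sq1[OF ksign_sq[of S j]] by simp
qed

lemma loc_anti_lt:
  assumes j: "j \<in> {1..r}" and k: "k \<in> {1..r}" and jk: "k < j" and S: "S \<in> PP"
  shows "mm (loc j c0 c1) (loc k d0 d1) S'' S + mm (loc k d0 d1) (loc j c0 c1) S'' S = 0"
proof (cases "k \<in> S"; cases "j \<in> S")
  assume kS: "k \<in> S" and jS: "j \<in> S"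
  have X: "S - {k} - {j} = (if True then S - {j} - {k} else insert k (S - {j}))" using kS jS jk by auto
  have eq1: "mm (loc j c0 c1) (loc k d0 d1) S'' S = loc j c0 c1 S'' (S - {k}) * (ksign ws S k * d1)"
    using kS by (simp add: mm_loc_right[OF k S])
  have eq2: "mm (loc k d0 d1) (loc j c0 c1) S'' S = loc k d0 d1 S'' (S - {j}) * (ksign ws S j * c1)"
    using jS by (simp add: mm_loc_right[OF j S])
  have 1: "loc j c0 c1 S'' (S - {k}) = (if S'' = S - {k} - {j} then - ksign ws S j * c1 else 0)"
    unfolding loc_def using kS jS jk k ksign_remove_lt[of k j S] by auto
  have 2: "loc k d0 d1 S'' (S - {j}) = (if S'' = S - {k} - {j} then ksign ws S k * d1 else 0)"
    unfolding loc_def using kS jS jk X ksign_remove_ge[of k j S] by auto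
  show ?thesis unfolding eq1 eq2 1 2 by (rule ring_gen_anti)
  next
  assume kS: "k \<in> S" and jS: "j \<notin> S"
  have X: "insert j (S - {k}) = (if True then insert j S - {k} else insert k (insert j S))" using kS jS jk by auto
  have eq1: "mm (loc j c0 c1) (loc k d0 d1) S'' S = loc j c0 c1 S'' (S - {k}) * (ksign ws S k * d1)"
    using kS by (simp add: mm_loc_right[OF k S])
  have eq2: "mm (loc k d0 d1) (loc j c0 c1) S'' S = loc k d0 d1 S'' (insert j S) * (ksign ws S j * c0)"
    using jS by (simp add: mm_loc_right[OF j S])
  have 1: "loc j c0 c1 S'' (S - {k}) = (if S'' = insert j (S - {k}) then - ksign ws S j * c0 else 0)"
    unfolding loc_def using kS jS jk k ksign_remove_lt[of k j S] by auto
  have 2: "loc k d0 d1 S'' (insert j S) = (if S'' = insert j (S - {k}) then ksign ws S k * d1 else 0)"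
    unfolding loc_def using kS jS jk X ksign_insert_ge[of k j S] by auto
  show ?thesis unfolding eq1 eq2 1 2 by (rule ring_gen_anti)
  next
  assume kS: "k \<notin> S" and jS: "j \<in> S"
  have X: "insert k S - {j} = (if False then S - {j} - {k} else insert k (S - {j}))" using kS jS jk by auto
  have eq1: "mm (loc j c0 c1) (loc k d0 d1) S'' S = loc j c0 c1 S'' (insert k S) * (ksign ws S k * d0)"
    using kS by (simp add: mm_loc_right[OF k S])
  have eq2: "mm (loc k d0 d1) (loc j c0 c1) S'' S = loc k d0 d1 S'' (S - {j}) * (ksign ws S j * c1)"
    using jS by (simp add: mm_loc_right[OF j S])
  have 1: "loc j c0 c1 S'' (insert k S) = (if S'' = insert k S - {j} then - ksign ws S j * c1 else 0)"
    unfolding loc_def using kS jS jk k ksign_insert_lt[of k j S] by auto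
  have 2: "loc k d0 d1 S'' (S - {j}) = (if S'' = insert k S - {j} then ksign ws S k * d0 else 0)"
    unfolding loc_def using kS jS jk X ksign_remove_ge[of k j S] by auto
  show ?thesis unfolding eq1 eq2 1 2 by (rule ring_gen_anti)
  next
  assume kS: "k \<notin> S" and jS: "j \<notin> S"
  have X: "insert j (insert k S) = (if False then insert j S - {k} else insert k (insert j S))" using kS jS jk by auto
  have eq1: "mm (loc j c0 c1) (loc k d0 d1) S'' S = loc j c0 c1 S'' (insert k S) * (ksign ws S k * d0)"
    using kS by (simp add: mm_loc_right[OF k S])
  have eq2: "mm (loc k d0 d1) (loc j c0 c1) S'' S = loc k d0 d1 S'' (insert j S) * (ksign ws S j * c0)"
    using jS by (simp add: mm_loc_right[OF j S])
  have 1: "loc j c0 c1 S'' (insert k S) = (if S'' = insert j (insert k S) then - ksign ws S j * c0 else 0)"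
    unfolding loc_def using kS jS jk k ksign_insert_lt[of k j S] by auto
  have 2: "loc k d0 d1 S'' (insert j S) = (if S'' = insert j (insert k S) then ksign ws S k * d0 else 0)"
    unfolding loc_def using kS jS jk X ksign_insert_ge[of k j S] by auto
  show ?thesis unfolding eq1 eq2 1 2 by (rule ring_gen_anti)
qed

end

context bw begin

lemma mm_sum_right: "mm M (\<lambda>S' S. \<Sum>x\<in>A. F x S' S) S'' S = (\<Sum>x\<in>A. mm M (F x) S'' S)"
  unfolding mm_def sum_distrib_left by (rule sum.swap)

lemma mm_sum_left: "mm (\<lambda>S' S. \<Sum>x\<in>A. F x S' S) N S'' S = (\<Sum>x\<in>A. mm (F x) N S'' S)"
  unfolding mm_def sum_distrib_right by (rule sum.swap)

lemma mm_assoc: "mm (mm A B) C S'' S = mm A (mm B C) S'' S"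
proof -
  have "mm (mm A B) C S'' S = (\<Sum>T\<in>PP. \<Sum>T'\<in>PP. A S'' T' * B T' T * C T S)"
    unfolding mm_def sum_distrib_right by (rule refl)
  also have "\<dots> = (\<Sum>T'\<in>PP. \<Sum>T\<in>PP. A S'' T' * B T' T * C T S)" by (rule sum.swap)
  also have "\<dots> = mm A (mm B C) S'' S"
    unfolding mm_def sum_distrib_left by (rule sum.cong[OF refl])+ (rule mult.assoc)
  finally show ?thesis .
qed

lemma Dm_lam: "Dm = (\<lambda>S' S. \<Sum>j\<in>{1..r}. Dl j S' S)"
  by (rule ext)+ (rule Dm_def)

lemma comm_DX:
  assumes k: "k \<in> {1..r}" and S: "S \<in> PP"
  shows "mm Dm (Xl k b) S'' S + mm (Xl k b) Dm S'' S = (if S'' = S then cf k b * kap k else 0)"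
proof -
  let ?f = "\<lambda>j. mm (Dl j) (Xl k b) S'' S + mm (Xl k b) (Dl j) S'' S"
  have "mm Dm (Xl k b) S'' S + mm (Xl k b) Dm S'' S = (\<Sum>j\<in>{1..r}. ?f j)"
    unfolding Dm_lam mm_sum_left mm_sum_right sum.distrib by (rule refl)
  also have "\<dots> = ?f k + (\<Sum>j\<in>{1..r} - {k}. ?f j)"
    using k by (subst sum.remove[of _ k]) auto
  also have "(\<Sum>j\<in>{1..r} - {k}. ?f j) = 0"
  proof (rule sum.neutral, rule ballI)
    fix j assume j: "j \<in> {1..r} - {k}"
    then have j1: "j \<in> {1..r}" and jk: "j \<noteq> k" by auto
    show "?f j = 0"
    proof (cases "k < j")
      case True
      then show ?thesis unfolding Dl_def Xl_def by (rule loc_anti_lt[OF j1 k _ S])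
    next
      case False
      then have "j < k" using jk by simp
      from loc_anti_lt[OF k j1 this S] show ?thesis unfolding Dl_def Xl_def by (simp add: add.commute)
    qed
  qed
  also have "?f k = (if S'' = S then cf k b * kap k else 0)"
    unfolding Dl_def Xl_def loc_same[OF k S] by (cases "ge k"; cases "k \<in> S") simp_all
  finally show ?thesis by simp
qed

lemma comm_DX':
  assumes k: "k \<in> {1..r}" and S: "S \<in> PP"
  shows "mm Dm (Xl k b) S'' S = (if S'' = S then cf k b * kap k else 0) - mm (Xl k b) Dm S'' S"
  using comm_DX[OF k S, of b S''] by (simp add: eq_diff_eq)

lemma comm_XD':
  assumes k: "k \<in> {1..r}" and S: "S \<in> PP"
  shows "mm (Xl k b) Dm S'' S = (if S'' = S then cf k b * kap k else 0) - mm Dm (Xl k b) S'' S"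
  using comm_DX[OF k S, of b S''] by (simp add: eq_diff_eq add.commute)

lemma comm_XX:
  assumes j: "j \<in> {1..r}" and k: "k \<in> {1..r}" and S'': "S'' \<in> PP" and S: "S \<in> PP"
  shows "mm Dm (mm (Xl j b) (Xl k c)) S'' S - mm (mm (Xl j b) (Xl k c)) Dm S'' S
       = cf j b * kap j * Xl k c S'' S - Xl j b S'' S * (cf k c * kap k)"
proof -
  let ?X = "Xl j b" and ?Y = "Xl k c"
  have A: "mm Dm (mm ?X ?Y) S'' S = cf j b * kap j * ?Y S'' S - mm (mm ?X Dm) ?Y S'' S"
  proof -
    have "mm Dm (mm ?X ?Y) S'' S = mm (mm Dm ?X) ?Y S'' S" by (rule mm_assoc[symmetric])
    also have "\<dots> = (\<Sum>T\<in>PP. (if S'' = T then cf j b * kap j * ?Y T S else 0) - mm ?X Dm S'' T * ?Y T S)"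
      unfolding mm_def[of "mm Dm ?X"]
      by (rule sum.cong[OF refl]) (simp add: comm_DX'[OF j] left_diff_distrib)
    also have "\<dots> = cf j b * kap j * ?Y S'' S - mm (mm ?X Dm) ?Y S'' S"
      unfolding sum_subtractf using S'' by (simp add: sum.delta mm_def[of "mm ?X Dm"])
    finally show ?thesis .
  qed
  have B: "mm (mm ?X ?Y) Dm S'' S = ?X S'' S * (cf k c * kap k) - mm ?X (mm Dm ?Y) S'' S"
  proof -
    have "mm (mm ?X ?Y) Dm S'' S = mm ?X (mm ?Y Dm) S'' S" by (rule mm_assoc)
    also have "\<dots> = (\<Sum>T\<in>PP. (if T = S then ?X S'' T * (cf k c * kap k) else 0) - ?X S'' T * mm Dm ?Y T S)"
      unfolding mm_def[of ?X "mm ?Y Dm"]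
      by (rule sum.cong[OF refl]) (simp add: comm_XD'[OF k S] right_diff_distrib)
    also have "\<dots> = ?X S'' S * (cf k c * kap k) - mm ?X (mm Dm ?Y) S'' S"
      unfolding sum_subtractf using S by (simp add: sum.delta mm_def[of ?X "mm Dm ?Y"])
    finally show ?thesis .
  qed
  have C: "mm (mm ?X Dm) ?Y S'' S = mm ?X (mm Dm ?Y) S'' S" by (rule mm_assoc)
  show ?thesis unfolding A B C by simp
qed

lemma U_lam: "U = (\<lambda>S' S. \<Sum>a\<in>{1..n}. \<Sum>k\<in>{1..r}. \<Sum>j\<in>{1..<k}. mm (Xl j (cp j a)) (Xl k (cp k a)) S' S)"
  by (rule ext)+ (rule U_def)

lemma U_comm:
  assumes S'': "S'' \<in> PP" and S: "S \<in> PP"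
  shows "mm Dm U S'' S - mm U Dm S'' S = (\<Sum>a\<in>{1..n}. \<Sum>k\<in>{1..r}. \<Sum>j\<in>{1..<k}.
     cf j (cp j a) * kap j * Xl k (cp k a) S'' S - Xl j (cp j a) S'' S * (cf k (cp k a) * kap k))"
proof -
  have e1: "mm Dm U S'' S = (\<Sum>a\<in>{1..n}. \<Sum>k\<in>{1..r}. \<Sum>j\<in>{1..<k}. mm Dm (mm (Xl j (cp j a)) (Xl k (cp k a))) S'' S)"
    unfolding U_lam by (simp only: mm_sum_right)
  have e2: "mm U Dm S'' S = (\<Sum>a\<in>{1..n}. \<Sum>k\<in>{1..r}. \<Sum>j\<in>{1..<k}. mm (mm (Xl j (cp j a)) (Xl k (cp k a))) Dm S'' S)"
    unfolding U_lam by (simp only: mm_sum_left)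
  show ?thesis unfolding e1 e2 sum_subtractf[symmetric]
  proof (intro sum.cong refl)
    fix a k j assume k: "k \<in> {1..r}" and j: "j \<in> {1..<k}"
    then have j': "j \<in> {1..r}" by auto
    show "mm Dm (mm (Xl j (cp j a)) (Xl k (cp k a))) S'' S - mm (mm (Xl j (cp j a)) (Xl k (cp k a))) Dm S'' S =
      cf j (cp j a) * kap j * Xl k (cp k a) S'' S - Xl j (cp j a) S'' S * (cf k (cp k a) * kap k)"
      by (rule comm_XX[OF j' k S'' S])
  qed
qed

end

lemma gid1: "((a::'a::comm_ring_1) - d) * (a - c) = a * (a + b - c - d) - (a * b - c * d)"
  by (simp add: algebra_simps)
lemma gid2: "((a::'a::comm_ring_1) - d) * (b - d) = (a * b - c * d) - d * (a + b - c - d)"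
  by (simp add: algebra_simps)
lemma gid3: "(a::'a::comm_ring_1) * b - c * d = b * (a - c) + c * (b - d)"
  by (simp add: algebra_simps)
lemma gid4: "(a::'a::comm_ring_1) + b - c - d = (a - c) + (b - d)"
  by (simp add: algebra_simps)
lemma gid5: "((a::'a::comm_ring_1) - b + d - c) * (a - d) = (a + b - c - d) * (a - d + 2 * d) - 2 * (a * b - c * d)"
  by (simp add: algebra_simps)
lemma gid6: "(a::'a::comm_ring_1) - b + d - c = (a - c) - (b - d)"
  by (simp add: algebra_simps)
lemma gid7: "- ((a::'a::comm_ring_1) - d) - (b - c) = - (a + b - c - d)"
  by (simp add: algebra_simps)

context bw begin

definition xd :: "nat \<Rightarrow> nat \<Rightarrow> mpoly" where "xd j b = Var (j-1) b - Var j b"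
definition g1 :: "nat \<Rightarrow> mpoly" where
  "g1 j = Var (j-1) (gi j) + Var (j-1) (gi j + 1) - Var j (gi j) - Var j (gi j + 1)"
definition g2 :: "nat \<Rightarrow> mpoly" where
  "g2 j = Var (j-1) (gi j) * Var (j-1) (gi j + 1) - Var j (gi j) * Var j (gi j + 1)"

lemma fac_rels_B: "fac_rels n j (gi j) True = {g1 j, g2 j} \<union> {xd j b | b. b \<in> {1..n} \<and> b \<noteq> gi j \<and> b \<noteq> gi j + 1}"
  unfolding fac_rels_def g1_def g2_def xd_def by simp

lemma fac_rels_R: "fac_rels n j (gi j) False = {xd j b | b. b \<in> {1..n}}"
  unfolding fac_rels_def xd_def by simp

lemma gen_in: "j \<in> {1..r} \<Longrightarrow> g \<in> fac_rels n j (gi j) (j \<in> S) \<Longrightarrow> g \<in> Ide S"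
  unfolding Ide_def Gs_def by (rule rm.span_base) blast

lemma I1: "j \<in> {1..r} \<Longrightarrow> j \<notin> S \<Longrightarrow> b \<in> {1..n} \<Longrightarrow> xd j b \<in> Ide S"
  by (rule gen_in) (auto simp: fac_rels_R)

lemma I2: "j \<in> {1..r} \<Longrightarrow> b \<in> {1..n} \<Longrightarrow> b \<noteq> gi j \<Longrightarrow> b \<noteq> gi j + 1 \<Longrightarrow> xd j b \<in> Ide S"
proof (cases "j \<in> S")
  case True
  assume "j \<in> {1..r}" "b \<in> {1..n}" "b \<noteq> gi j" "b \<noteq> gi j + 1"
  then show ?thesis using True by (intro gen_in) (auto simp: fac_rels_B)
next
  case False
  assume "j \<in> {1..r}" "b \<in> {1..n}"
  then show ?thesis using False by (rule_tac I1) auto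
qed

lemma gi_in: "j \<in> {1..r} \<Longrightarrow> gi j \<in> {1..n} \<and> gi j + 1 \<in> {1..n}"
  using gi_bounds[of j] by auto

lemma I4: assumes j: "j \<in> {1..r}" shows "g1 j \<in> Ide S"
proof (cases "j \<in> S")
  case True
  then show ?thesis using j by (intro gen_in) (auto simp: fac_rels_B)
next
  case False
  have "g1 j = xd j (gi j) + xd j (gi j + 1)" unfolding g1_def xd_def by (rule gid4)
  moreover have "xd j (gi j) \<in> Ide S" "xd j (gi j + 1) \<in> Ide S"
    using I1[OF j False] gi_in[OF j] by auto
  ultimately show ?thesis unfolding Ide_def by (simp add: rm.span_add)
qed

lemma I5: assumes j: "j \<in> {1..r}" shows "g2 j \<in> Ide S"
proof (cases "j \<in> S")
  case True
  then show ?thesis using j by (intro gen_in) (auto simp: fac_rels_B)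
next
  case False
  have "g2 j = Var (j-1) (gi j + 1) * xd j (gi j) + Var j (gi j) * xd j (gi j + 1)"
    unfolding g2_def xd_def by (rule gid3)
  moreover have "xd j (gi j) \<in> Ide S" "xd j (gi j + 1) \<in> Ide S"
    using I1[OF j False] gi_in[OF j] by auto
  ultimately show ?thesis unfolding Ide_def by (simp add: rm.span_add rm.span_scale)
qed

lemma I6: assumes j: "j \<in> {1..r}" and b: "b \<in> {1..n}" shows "kap j * xd j b \<in> Ide S"
proof -
  consider "b = gi j" | "b = gi j + 1" | "b \<noteq> gi j \<and> b \<noteq> gi j + 1" by blast
  then show ?thesis
  proof cases
    case 1
    have "kap j * xd j b = Var (j-1) (gi j) * g1 j - g2 j"
      unfolding 1 kap_def xd_def g1_def g2_def by (rule gid1)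
    then show ?thesis using I4[OF j, of S] I5[OF j, of S] unfolding Ide_def
      by (simp add: rm.span_diff rm.span_scale)
  next
    case 2
    have "kap j * xd j b = g2 j - Var j (gi j + 1) * g1 j"
      unfolding 2 kap_def xd_def g1_def g2_def by (rule gid2)
    then show ?thesis using I4[OF j, of S] I5[OF j, of S] unfolding Ide_def
      by (simp add: rm.span_diff rm.span_scale)
  next
    case 3
    then show ?thesis using I2[OF j b, of S] unfolding Ide_def by (simp add: rm.span_scale)
  qed
qed

lemma I7: assumes j: "j \<in> {1..r}" and b: "b \<in> {1..n}"
  shows "cf j b * kap j - (Var (j-1) b - Var j (stran (gi j) b)) \<in> Ide S"
proof -
  consider "b = gi j" | "b = gi j + 1" | "b \<noteq> gi j \<and> b \<noteq> gi j + 1" by blast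
  then show ?thesis
  proof cases
    case 1
    then show ?thesis unfolding cf_def kap_def stran_def Ide_def by (simp add: rm.span_zero)
  next
    case 2
    have "cf j b * kap j - (Var (j-1) b - Var j (stran (gi j) b)) = - g1 j"
      unfolding 2 cf_def kap_def stran_def g1_def by (simp add: gid7)
    then show ?thesis using I4[OF j, of S] unfolding Ide_def by (simp add: rm.span_neg)
  next
    case 3
    then have "cf j b * kap j - (Var (j-1) b - Var j (stran (gi j) b)) = - xd j b"
      unfolding cf_def stran_def xd_def by simp
    then show ?thesis using I2[OF j b, of S] 3 unfolding Ide_def by (simp add: rm.span_neg)
  qed
qed

end

lemma gid8: "(s::'a::comm_ring_1) * (c * k) * p = (s * c) * (k * p)" by (simp add: algebra_simps)

context bw begin

definition resp :: "(nat set \<Rightarrow> nat set \<Rightarrow> mpoly) \<Rightarrow> bool" where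
  "resp M \<longleftrightarrow> (\<forall>S'' T p. p \<in> Ide T \<longrightarrow> M S'' T * p \<in> Ide S'')"

lemma Gs_elim:
  assumes "g \<in> Gs T"
  obtains l where "l \<in> {1..r}" "g \<in> fac_rels n l (gi l) (l \<in> T)"
  using assms unfolding Gs_def by blast

lemma Ide_remove:
  assumes j: "j \<in> {1..r}" and p: "p \<in> Ide T"
  shows "p \<in> Ide (T - {j})"
proof -
  have "1 * p \<in> Ide (T - {j})" unfolding Ide_def
  proof (rule span_mult_sub)
    show "p \<in> rm.span (Gs T)" using p unfolding Ide_def .
  next
    fix g assume "g \<in> Gs T"
    then obtain l where l: "l \<in> {1..r}" "g \<in> fac_rels n l (gi l) (l \<in> T)" by (rule Gs_elim)
    show "1 * g \<in> rm.span (Gs (T - {j}))"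
    proof (cases "l = j \<and> j \<in> T")
      case True
      then have "g \<in> {g1 j, g2 j} \<union> {xd j b | b. b \<in> {1..n} \<and> b \<noteq> gi j \<and> b \<noteq> gi j + 1}"
        using l(2) fac_rels_B by simp
      then have "g \<in> Ide (T - {j})" using I4[OF j] I5[OF j] I2[OF j] by blast
      then show ?thesis unfolding Ide_def by simp
    next
      case False
      then have "(l \<in> T) = (l \<in> T - {j})" by auto
      then have "g \<in> Ide (T - {j})" using gen_in[OF l(1), of g "T - {j}"] l(2) by simp
      then show ?thesis unfolding Ide_def by simp
    qed
  qed
  then show ?thesis by simp
qed

lemma kap_Ide_insert:
  assumes j: "j \<in> {1..r}" and p: "p \<in> Ide T"
  shows "kap j * p \<in> Ide (insert j T)"
  unfolding Ide_def
proof (rule span_mult_sub)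
  show "p \<in> rm.span (Gs T)" using p unfolding Ide_def .
next
  fix g assume "g \<in> Gs T"
  then obtain l where l: "l \<in> {1..r}" "g \<in> fac_rels n l (gi l) (l \<in> T)" by (rule Gs_elim)
  show "kap j * g \<in> rm.span (Gs (insert j T))"
  proof (cases "l = j \<and> j \<notin> T")
    case True
    then obtain b where "g = xd j b" "b \<in> {1..n}" using l(2) fac_rels_R by auto
    then show ?thesis using I6[OF j, of b "insert j T"] unfolding Ide_def by simp
  next
    case False
    then have "(l \<in> T) = (l \<in> insert j T)" by auto
    then have "g \<in> Ide (insert j T)" using gen_in[OF l(1), of g "insert j T"] l(2) by simp
    then show ?thesis unfolding Ide_def by (rule rm.span_scale)
  qed
qed

lemma resp_Xl: assumes j: "j \<in> {1..r}" shows "resp (Xl j b)"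
  unfolding resp_def
proof (intro allI impI)
  fix S'' T p assume p: "p \<in> Ide T"
  consider "j \<in> T" "S'' = T - {j}" | "j \<notin> T" "S'' = insert j T" | "\<not> (j \<in> T \<and> S'' = T - {j})" "\<not> (j \<notin> T \<and> S'' = insert j T)"
    by blast
  then show "Xl j b S'' T * p \<in> Ide S''"
  proof cases
    case 1
    have "p \<in> Ide S''" using Ide_remove[OF j p] 1 by simp
    then show ?thesis unfolding Xl_def loc_def using 1 unfolding Ide_def by (simp add: rm.span_scale rm.span_zero)
  next
    case 2
    have "kap j * p \<in> Ide S''" using kap_Ide_insert[OF j p] 2 by simp
    then have "ksign ws T j * cf j b * (kap j * p) \<in> Ide S''" unfolding Ide_def by (rule rm.span_scale)
    then show ?thesis unfolding Xl_def loc_def using 2 unfolding Ide_def by (simp add: gid8 rm.span_zero)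
  next
    case 3
    have "Xl j b S'' T = 0" unfolding Xl_def loc_def by (simp only: if_not_P[OF 3(1)] if_not_P[OF 3(2)])
    then show ?thesis unfolding Ide_def by (simp add: rm.span_zero)
  qed
qed

lemma resp_mm: "resp M \<Longrightarrow> resp N \<Longrightarrow> resp (mm M N)"
  unfolding resp_def
proof (intro allI impI)
  fix S'' T p assume M: "\<forall>S'' T p. p \<in> Ide T \<longrightarrow> M S'' T * p \<in> Ide S''"
    and N: "\<forall>S'' T p. p \<in> Ide T \<longrightarrow> N S'' T * p \<in> Ide S''" and p: "p \<in> Ide T"
  have "mm M N S'' T * p = (\<Sum>T'\<in>PP. M S'' T' * (N T' T * p))"
    unfolding mm_def sum_distrib_right by (rule sum.cong[OF refl]) (rule mult.assoc)
  also have "\<dots> \<in> Ide S''" unfolding Ide_def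
  proof (rule rm.span_sum)
    fix T' have "N T' T * p \<in> Ide T'" using N p by blast
    then show "M S'' T' * (N T' T * p) \<in> rm.span (Gs S'')" using M unfolding Ide_def by blast
  qed
  finally show "mm M N S'' T * p \<in> Ide S''" .
qed

lemma resp_sum: "(\<And>x. x \<in> A \<Longrightarrow> resp (F x)) \<Longrightarrow> resp (\<lambda>S' S. \<Sum>x\<in>A. F x S' S)"
  unfolding resp_def
proof (intro allI impI)
  fix S'' T p assume F: "\<And>x. x \<in> A \<Longrightarrow> \<forall>S'' T p. p \<in> Ide T \<longrightarrow> F x S'' T * p \<in> Ide S''"
    and p: "p \<in> Ide T"
  have "(\<Sum>x\<in>A. F x S'' T) * p = (\<Sum>x\<in>A. F x S'' T * p)" by (rule sum_distrib_right)
  also have "\<dots> \<in> Ide S''" unfolding Ide_def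
    by (rule rm.span_sum) (use F p in \<open>auto simp: Ide_def\<close>)
  finally show "(\<Sum>x\<in>A. F x S'' T) * p \<in> Ide S''" .
qed

lemma resp_U: "resp U"
  unfolding U_lam
proof (intro resp_sum)
  fix a k j assume k: "k \<in> {1..r}" and j: "j \<in> {1..<k}"
  then have j': "j \<in> {1..r}" by auto
  show "resp (mm (Xl j (cp j a)) (Xl k (cp k a)))" by (intro resp_mm resp_Xl j' k)
qed

end

context bw begin

definition ringM :: "(nat set \<Rightarrow> nat set \<Rightarrow> mpoly) \<Rightarrow> bool" where
  "ringM M \<longleftrightarrow> (\<forall>S' S. in_ring r n (M S' S))"

lemma in_ring_ksign: "in_ring r n (ksign ws S j)"
  unfolding ksign_def by (intro in_ring_pow in_ring_uminus in_ring_1)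

lemma in_ring_cf: "in_ring r n (cf j b)"
  unfolding cf_def using in_ring_uminus[OF in_ring_1] in_ring_1 in_ring_0 by simp

lemma in_ring_kap: assumes j: "j \<in> {1..r}" shows "in_ring r n (kap j)"
  unfolding kap_def using gi_bounds[OF j] j by (intro in_ring_diff in_ring_Var) auto

lemma ringM_Xl: assumes j: "j \<in> {1..r}" shows "ringM (Xl j b)"
  unfolding ringM_def
proof (intro allI)
  fix S' S
  have a: "in_ring r n (ksign ws S j * (cf j b * kap j))"
    by (intro in_ring_mult in_ring_ksign in_ring_cf in_ring_kap[OF j])
  have b: "in_ring r n (ksign ws S j * cf j b)"
    by (intro in_ring_mult in_ring_ksign in_ring_cf)
  have c: "in_ring r n (ksign ws S j * 0)" using in_ring_0 by simp
  show "in_ring r n (Xl j b S' S)"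
    unfolding Xl_def loc_def using a b c in_ring_0 by (cases "ge j") simp_all
qed

lemma ringM_mm: "ringM M \<Longrightarrow> ringM N \<Longrightarrow> ringM (mm M N)"
  unfolding ringM_def mm_def by (auto intro!: in_ring_sum in_ring_mult)

lemma ringM_sum: "(\<And>x. x \<in> A \<Longrightarrow> ringM (F x)) \<Longrightarrow> ringM (\<lambda>S' S. \<Sum>x\<in>A. F x S' S)"
  unfolding ringM_def by (auto intro!: in_ring_sum)

lemma ringM_U: "ringM U"
  unfolding U_lam
proof (intro ringM_sum)
  fix a k j assume k: "k \<in> {1..r}" and j: "j \<in> {1..<k}"
  then have j': "j \<in> {1..r}" by auto
  show "ringM (mm (Xl j (cp j a)) (Xl k (cp k a)))" by (intro ringM_mm ringM_Xl j' k)
qed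

definition hgood :: "(nat set \<Rightarrow> nat set \<Rightarrow> mpoly) \<Rightarrow> int \<Rightarrow> bool" where
  "hgood M d \<longleftrightarrow> (\<forall>S' S. M S' S \<noteq> 0 \<longrightarrow> hdeg ws S' = hdeg ws S + d)"

lemma hdeg_insert: assumes j: "j \<in> {1..r}" and S: "j \<notin> S"
  shows "hdeg ws S = hdeg ws (insert j S) + (if ge j then 1 else -1)"
proof -
  have e: "{1..r} - S = insert j ({1..r} - insert j S)" using j S by auto
  show ?thesis unfolding hdeg_def e ge_def by (subst sum.insert) auto
qed

lemma qshift_insert: assumes j: "j \<in> {1..r}" and S: "j \<notin> S"
  shows "qshift ws S = qshift ws (insert j S) + (if ge j then 0 else 2)"
proof -
  have e: "{1..r} - S = insert j ({1..r} - insert j S)" using j S by auto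
  show ?thesis unfolding qshift_def e ge_def by (subst sum.insert) auto
qed

lemma Xl_cases:
  assumes "Xl j b S' S \<noteq> 0"
  shows "(ge j \<and> j \<notin> S \<and> S' = insert j S \<and> Xl j b S' S = ksign ws S j * (cf j b * kap j))
       \<or> (\<not> ge j \<and> j \<in> S \<and> S' = S - {j} \<and> Xl j b S' S = ksign ws S j * cf j b)"
  using assms unfolding Xl_def loc_def
  by (cases "ge j"; cases "j \<in> S"; cases "S' = S - {j}"; cases "S' = insert j S"; simp)

lemma hgood_Xl: assumes j: "j \<in> {1..r}" shows "hgood (Xl j b) (-1)"
  unfolding hgood_def
proof (intro allI impI)
  fix S' S assume "Xl j b S' S \<noteq> 0"
  from Xl_cases[OF this] show "hdeg ws S' = hdeg ws S + - 1"
  proof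
    assume h: "ge j \<and> j \<notin> S \<and> S' = insert j S \<and> Xl j b S' S = ksign ws S j * (cf j b * kap j)"
    then show ?thesis using hdeg_insert[OF j, of S] by simp
  next
    assume h: "\<not> ge j \<and> j \<in> S \<and> S' = S - {j} \<and> Xl j b S' S = ksign ws S j * cf j b"
    then have "insert j (S - {j}) = S" by auto
    then show ?thesis using hdeg_insert[OF j, of "S - {j}"] h by simp
  qed
qed

lemma hgood_mm: assumes M: "hgood M d1" and N: "hgood N d2" shows "hgood (mm M N) (d1 + d2)"
  unfolding hgood_def
proof (intro allI impI)
  fix S'' S assume "mm M N S'' S \<noteq> 0"
  then obtain T where "M S'' T * N T S \<noteq> 0" unfolding mm_def by (meson sum.not_neutral_contains_not_neutral)
  then have "M S'' T \<noteq> 0" "N T S \<noteq> 0" by auto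
  then show "hdeg ws S'' = hdeg ws S + (d1 + d2)" using M N unfolding hgood_def by force
qed

lemma hgood_sum: "(\<And>x. x \<in> A \<Longrightarrow> hgood (F x) d) \<Longrightarrow> hgood (\<lambda>S' S. \<Sum>x\<in>A. F x S' S) d"
  unfolding hgood_def
proof (intro allI impI)
  fix S' S assume F: "\<And>x. x \<in> A \<Longrightarrow> \<forall>S' S. F x S' S \<noteq> 0 \<longrightarrow> hdeg ws S' = hdeg ws S + d"
    and "(\<Sum>x\<in>A. F x S' S) \<noteq> 0"
  then obtain x where "x \<in> A" "F x S' S \<noteq> 0" by (meson sum.not_neutral_contains_not_neutral)
  then show "hdeg ws S' = hdeg ws S + d" using F by blast
qed

lemma hgood_U: "hgood U (-2)"
  unfolding U_lam
proof (intro hgood_sum)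
  fix a k j assume k: "k \<in> {1..r}" and j: "j \<in> {1..<k}"
  then have j': "j \<in> {1..r}" by auto
  have "hgood (mm (Xl j (cp j a)) (Xl k (cp k a))) (-1 + -1)" by (intro hgood_mm hgood_Xl j' k)
  then show "hgood (mm (Xl j (cp j a)) (Xl k (cp k a))) (-2)" by simp
qed

definition qgood :: "(nat set \<Rightarrow> nat set \<Rightarrow> mpoly) \<Rightarrow> int \<Rightarrow> bool" where
  "qgood M d \<longleftrightarrow> (\<forall>S' S. \<forall>m\<in>Poly_Mapping.keys (M S' S). 2 * int (mdeg m) + qshift ws S' = qshift ws S + d)"

lemma hom_ksign: "hom 0 (ksign ws S j)"
  unfolding ksign_def by (intro hom_pow0 hom_uminus hom_1)

lemma hom_cf: "hom 0 (cf j b)"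
  unfolding cf_def using hom_uminus[OF hom_1] hom_1 hom_0 by simp

lemma hom_kap: "hom 1 (kap j)"
  unfolding kap_def by (intro hom_diff hom_Var)

lemma qgood_Xl: assumes j: "j \<in> {1..r}" shows "qgood (Xl j b) 2"
  unfolding qgood_def
proof (intro allI ballI)
  fix S' S m assume m: "m \<in> Poly_Mapping.keys (Xl j b S' S)"
  then have "Xl j b S' S \<noteq> 0" by auto
  from Xl_cases[OF this] show "2 * int (mdeg m) + qshift ws S' = qshift ws S + 2"
  proof
    assume h: "ge j \<and> j \<notin> S \<and> S' = insert j S \<and> Xl j b S' S = ksign ws S j * (cf j b * kap j)"
    have "hom (0 + (0 + 1)) (ksign ws S j * (cf j b * kap j))" by (intro hom_mult hom_ksign hom_cf hom_kap)
    moreover have "m \<in> Poly_Mapping.keys (ksign ws S j * (cf j b * kap j))" using m h by metis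
    ultimately have "mdeg m = 1" unfolding hom_def by simp
    then show ?thesis using qshift_insert[OF j, of S] h by simp
  next
    assume h: "\<not> ge j \<and> j \<in> S \<and> S' = S - {j} \<and> Xl j b S' S = ksign ws S j * cf j b"
    have "hom (0 + 0) (ksign ws S j * cf j b)" by (intro hom_mult hom_ksign hom_cf)
    moreover have "m \<in> Poly_Mapping.keys (ksign ws S j * cf j b)" using m h by metis
    ultimately have "mdeg m = 0" unfolding hom_def by simp
    moreover have "insert j (S - {j}) = S" using h by auto
    ultimately show ?thesis using qshift_insert[OF j, of "S - {j}"] h by simp
  qed
qed

lemma qgood_mm: assumes M: "qgood M d1" and N: "qgood N d2" shows "qgood (mm M N) (d1 + d2)"
  unfolding qgood_def
proof (intro allI ballI)
  fix S'' S m assume m: "m \<in> Poly_Mapping.keys (mm M N S'' S)"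
  have "m \<in> (\<Union>T\<in>PP. Poly_Mapping.keys (M S'' T * N T S))"
    using keys_sum[of "\<lambda>T. M S'' T * N T S" PP] m unfolding mm_def by (rule subsetD)
  then obtain T where "m \<in> Poly_Mapping.keys (M S'' T * N T S)" by (rule UN_E)
  then have "m \<in> {a + b | a b. a \<in> Poly_Mapping.keys (M S'' T) \<and> b \<in> Poly_Mapping.keys (N T S)}"
    using keys_mult[of "M S'' T" "N T S"] by (rule subsetD[rotated])
  then obtain a b where ab: "m = a + b" "a \<in> Poly_Mapping.keys (M S'' T)" "b \<in> Poly_Mapping.keys (N T S)"
    by (elim CollectE exE conjE)
  have "2 * int (mdeg a) + qshift ws S'' = qshift ws T + d1" using M ab(2) unfolding qgood_def by blast
  moreover have "2 * int (mdeg b) + qshift ws T = qshift ws S + d2" using N ab(3) unfolding qgood_def by blast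
  ultimately show "2 * int (mdeg m) + qshift ws S'' = qshift ws S + (d1 + d2)"
    unfolding ab(1) mdeg_add by simp
qed

lemma qgood_sum: "(\<And>x. x \<in> A \<Longrightarrow> qgood (F x) d) \<Longrightarrow> qgood (\<lambda>S' S. \<Sum>x\<in>A. F x S' S) d"
  unfolding qgood_def
proof (intro allI ballI)
  fix S' S m assume F: "\<And>x. x \<in> A \<Longrightarrow> \<forall>S' S. \<forall>m\<in>Poly_Mapping.keys (F x S' S). 2 * int (mdeg m) + qshift ws S' = qshift ws S + d"
    and m: "m \<in> Poly_Mapping.keys (\<Sum>x\<in>A. F x S' S)"
  have "m \<in> (\<Union>x\<in>A. Poly_Mapping.keys (F x S' S))"
    using keys_sum[of "\<lambda>x. F x S' S" A] m by (rule subsetD)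
  then obtain x where "x \<in> A" "m \<in> Poly_Mapping.keys (F x S' S)" by (rule UN_E)
  then show "2 * int (mdeg m) + qshift ws S' = qshift ws S + d" using F by blast
qed

lemma qgood_U: "qgood U 4"
  unfolding U_lam
proof (intro qgood_sum)
  fix a k j assume k: "k \<in> {1..r}" and j: "j \<in> {1..<k}"
  then have j': "j \<in> {1..r}" by auto
  have "qgood (mm (Xl j (cp j a)) (Xl k (cp k a))) (2 + 2)" by (intro qgood_mm qgood_Xl j' k)
  then show "qgood (mm (Xl j (cp j a)) (Xl k (cp k a))) 4" by simp
qed

end

lemma tel1: fixes z :: "nat \<Rightarrow> 'a::ab_group_add"
  shows "(\<Sum>j\<in>{1..<Suc k}. z (j-1) - z j) = z 0 - z k"
  by (induct k) simp_all

lemma sum_split_aux: "(\<Sum>j\<in>A. f j * c - X j * d) = (\<Sum>j\<in>A. f j) * c - (\<Sum>j\<in>A. X j) * (d::'a::comm_ring_1)"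
  by (simp add: sum_subtractf sum_distrib_right)

lemma tel_main: fixes z X :: "nat \<Rightarrow> 'a::comm_ring_1"
  shows "(\<Sum>k\<in>{1..r}. \<Sum>j\<in>{1..<k}. (z (j-1) - z j) * X k - X j * (z (k-1) - z k))
       = (\<Sum>k\<in>{1..r}. (z 0 + z r - z (k-1) - z k) * X k)"
proof (induct r)
  case 0
  then show ?case by simp
next
  case (Suc r)
  have inner: "(\<Sum>j\<in>{1..<Suc r}. (z (j-1) - z j) * X (Suc r) - X j * (z (Suc r - 1) - z (Suc r)))
      = (z 0 - z r) * X (Suc r) - (\<Sum>k\<in>{1..r}. X k) * (z r - z (Suc r))"
  proof -
    have t: "(\<Sum>j\<in>{1..<Suc r}. z (j-1) - z j) = z 0 - z r" by (rule tel1)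
    have "(\<Sum>j\<in>{1..<Suc r}. (z (j-1) - z j) * X (Suc r) - X j * (z (Suc r - 1) - z (Suc r)))
      = (\<Sum>j\<in>{1..<Suc r}. z (j-1) - z j) * X (Suc r) - (\<Sum>j\<in>{1..<Suc r}. X j) * (z (Suc r - 1) - z (Suc r))"
      by (rule sum_split_aux)
    then show ?thesis unfolding t by (simp add: atLeastLessThanSuc_atLeastAtMost)
  qed
  have L: "(\<Sum>k\<in>{1..Suc r}. \<Sum>j\<in>{1..<k}. (z (j-1) - z j) * X k - X j * (z (k-1) - z k))
      = (\<Sum>k\<in>{1..r}. \<Sum>j\<in>{1..<k}. (z (j-1) - z j) * X k - X j * (z (k-1) - z k))
        + ((z 0 - z r) * X (Suc r) - (\<Sum>k\<in>{1..r}. X k) * (z r - z (Suc r)))"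
    using inner by simp
  have R1: "(\<Sum>k\<in>{1..r}. (z 0 + z (Suc r) - z (k-1) - z k) * X k)
      = (\<Sum>k\<in>{1..r}. (z 0 + z r - z (k-1) - z k) * X k) + (z (Suc r) - z r) * (\<Sum>k\<in>{1..r}. X k)"
    unfolding sum_distrib_left sum.distrib[symmetric] by (rule sum.cong[OF refl]) (simp add: algebra_simps)
  have R: "(\<Sum>k\<in>{1..Suc r}. (z 0 + z (Suc r) - z (k-1) - z k) * X k)
      = (\<Sum>k\<in>{1..r}. (z 0 + z r - z (k-1) - z k) * X k) + (z (Suc r) - z r) * (\<Sum>k\<in>{1..r}. X k)
        + (z 0 - z r) * X (Suc r)"
    using R1 by simp
  show ?case unfolding L R Suc by (simp add: algebra_simps)
qed

lemma braid_perm_snoc: "braid_perm (xs @ [x]) = stran (fst x) \<circ> braid_perm xs"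
  by (induct xs) (simp_all add: comp_assoc)

lemma stran_bij: "1 \<le> i \<Longrightarrow> i < n \<Longrightarrow> bij_betw (stran i) {1..n} {1..n}"
  by (rule bij_betw_byWitness[where f'="stran i"]) (auto simp: stran_def)

lemma braid_perm_bij: "\<forall>x\<in>set xs. 1 \<le> fst x \<and> fst x < n \<Longrightarrow> bij_betw (braid_perm xs) {1..n} {1..n}"
proof (induct xs)
  case Nil
  then show ?case by (simp add: bij_betw_def)
next
  case (Cons x xs)
  have h: "bij_betw (braid_perm xs) {1..n} {1..n}" using Cons by simp
  have s: "bij_betw (stran (fst x)) {1..n} {1..n}" using Cons.prems by (intro stran_bij) auto
  show ?case unfolding braid_perm.simps(2) by (rule bij_betw_trans[OF s h])
qed

context bw begin

lemma cp_bij: "bij_betw (cp k) {1..n} {1..n}"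
proof -
  have "\<forall>x\<in>set (take (k-1) ws). 1 \<le> fst x \<and> fst x < n" using wf by (meson in_set_takeD)
  then show ?thesis unfolding cp_def by (rule braid_perm_bij)
qed

lemma cp_in: "a \<in> {1..n} \<Longrightarrow> cp k a \<in> {1..n}"
  using cp_bij[of k] by (meson bij_betwE)

lemma cp_Suc: assumes j: "j \<in> {1..r}" shows "cp (Suc j) a = stran (gi j) (cp j a)"
proof -
  have "take j ws = take (j-1) ws @ [ws ! (j-1)]"
    using j take_Suc_conv_app_nth[of "j-1" ws] by (cases j) auto
  then show ?thesis unfolding cp_def gi_def by (simp add: braid_perm_snoc)
qed

lemma cp_1: "cp 1 a = a" unfolding cp_def by simp
lemma cp_last: "cp (Suc r) a = braid_perm ws a" unfolding cp_def by simp

lemma Xl_cf: "Xl k b S'' S = cf k b * Xl k (gi k) S'' S"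
proof -
  have c1: "cf k (gi k) = 1" unfolding cf_def by simp
  show ?thesis unfolding Xl_def loc_def c1
    by (cases "ge k"; cases "k \<in> S"; cases "S'' = S - {k}"; cases "S'' = insert k S")
       (simp_all add: mult.left_commute)
qed

end

lemma gid9: "(w::'a::comm_ring_1) * (s * (c * k)) = (s * c) * (w * k)" by (simp add: algebra_simps)
lemma gid10: "(a::'a::comm_ring_1) + d - (b + c) = a - b + d - c" by (simp add: algebra_simps)
lemma gid11: "(p1::'a::comm_ring_1) * x - y * p2 - (d1 * x - y * d2) = (p1 - d1) * x - y * (p2 - d2)"
  by (simp add: algebra_simps)
lemma gid12: "((z0::'a::comm_ring_1) + zr - u - v) * x - (z0 + zr) * x = - ((u + v) * x)"
  by (simp add: algebra_simps)
lemma gid13: "(a::'a::comm_ring_1) - c = (a - b) + (b - c)" by (simp add: algebra_simps)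

context bw begin

lemma perk:
  assumes k: "k \<in> {1..r}"
  shows "(\<Sum>a\<in>{1..n}. (Var (k-1) (cp k a) + Var k (cp (Suc k) a)) * Xl k (cp k a) S'' S) \<in> Ide S''"
proof -
  define i where "i = gi k"
  define F where "F b = Var (k-1) b + Var k (stran i b)" for b
  define Y where "Y = Xl k i S'' S"
  have i: "i \<in> {1..n}" "i + 1 \<in> {1..n}" using gi_in[OF k] unfolding i_def by auto
  have e1: "(\<Sum>a\<in>{1..n}. (Var (k-1) (cp k a) + Var k (cp (Suc k) a)) * Xl k (cp k a) S'' S)
      = (\<Sum>a\<in>{1..n}. (\<lambda>b. F b * Xl k b S'' S) (cp k a))"
    unfolding F_def i_def cp_Suc[OF k] by (rule refl)
  also have "\<dots> = (\<Sum>b\<in>{1..n}. F b * Xl k b S'' S)"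
    by (rule sum.reindex_bij_betw[OF cp_bij, of "\<lambda>b. F b * Xl k b S'' S"])
  also have "\<dots> = (\<Sum>b\<in>{1..n}. F b * cf k b) * Y"
    unfolding sum_distrib_right
  proof (rule sum.cong[OF refl])
    fix b
    show "F b * Xl k b S'' S = F b * cf k b * Y"
      unfolding Y_def i_def by (subst Xl_cf) (rule mult.assoc[symmetric])
  qed
  also have "(\<Sum>b\<in>{1..n}. F b * cf k b) = F i - F (i + 1)"
  proof -
    have "\<And>b. F b * cf k b = (if b = i then F i else 0) - (if b = i + 1 then F (i+1) else 0)"
      unfolding cf_def i_def by simp
    then have "(\<Sum>b\<in>{1..n}. F b * cf k b) = (\<Sum>b\<in>{1..n}. if b = i then F i else 0) - (\<Sum>b\<in>{1..n}. if b = i + 1 then F (i+1) else 0)"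
      by (simp only: sum_subtractf)
    then show ?thesis using i by (simp add: sum.delta)
  qed
  also have "F i - F (i + 1) = Var (k-1) i - Var (k-1) (i+1) + Var k (i+1) - Var k i"
    unfolding F_def stran_def by (simp add: gid10)
  finally have e: "(\<Sum>a\<in>{1..n}. (Var (k-1) (cp k a) + Var k (cp (Suc k) a)) * Xl k (cp k a) S'' S)
     = (Var (k-1) i - Var (k-1) (i+1) + Var k (i+1) - Var k i) * Y" .
  have c1: "cf k i = 1" unfolding cf_def i_def by simp
  have "(Var (k-1) i - Var (k-1) (i+1) + Var k (i+1) - Var k i) * Y \<in> Ide S''"
  proof (cases "Y = 0")
    case True
    then show ?thesis unfolding Ide_def by (simp add: rm.span_zero)
  next
    case False
    then have "Xl k i S'' S \<noteq> 0" unfolding Y_def .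
    from Xl_cases[OF this] show ?thesis
    proof
      assume h: "ge k \<and> k \<notin> S \<and> S'' = insert k S \<and> Xl k i S'' S = ksign ws S k * (cf k i * kap k)"
      have "(Var (k-1) i - Var (k-1) (i+1) + Var k (i+1) - Var k i) * kap k
          = g1 k * (kap k + 2 * Var k (gi k + 1)) - 2 * g2 k"
        unfolding kap_def g1_def g2_def i_def by (rule gid5)
      moreover have "g1 k * (kap k + 2 * Var k (gi k + 1)) - 2 * g2 k \<in> Ide S''"
      proof -
        have a: "(kap k + 2 * Var k (gi k + 1)) * g1 k \<in> Ide S''"
          using I4[OF k, of S''] unfolding Ide_def by (rule rm.span_scale)
        have b: "2 * g2 k \<in> Ide S''" using I5[OF k, of S''] unfolding Ide_def by (rule rm.span_scale)
        have c: "g1 k * (kap k + 2 * Var k (gi k + 1)) = (kap k + 2 * Var k (gi k + 1)) * g1 k"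
          by (rule mult.commute)
        show ?thesis unfolding c using a b unfolding Ide_def by (rule rm.span_diff)
      qed
      ultimately have "(Var (k-1) i - Var (k-1) (i+1) + Var k (i+1) - Var k i) * kap k \<in> Ide S''" by simp
      then have sp: "(ksign ws S k * cf k i) * ((Var (k-1) i - Var (k-1) (i+1) + Var k (i+1) - Var k i) * kap k) \<in> Ide S''"
        unfolding Ide_def by (rule rm.span_scale)
      have hv: "Xl k i S'' S = ksign ws S k * (cf k i * kap k)" using h by blast
      show ?thesis unfolding Y_def hv gid9 by (rule sp)
    next
      assume h: "\<not> ge k \<and> k \<in> S \<and> S'' = S - {k} \<and> Xl k i S'' S = ksign ws S k * cf k i"
      have kS: "k \<notin> S''" using h by simp
      have "Var (k-1) i - Var (k-1) (i+1) + Var k (i+1) - Var k i = xd k i - xd k (i+1)"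
        unfolding xd_def by (rule gid6)
      moreover have "xd k i - xd k (i+1) \<in> Ide S''"
        using I1[OF k kS] i unfolding Ide_def by (intro rm.span_diff) auto
      ultimately have sp: "(ksign ws S k * cf k i) * (Var (k-1) i - Var (k-1) (i+1) + Var k (i+1) - Var k i) \<in> Ide S''"
        unfolding Ide_def by (simp add: rm.span_scale)
      have hv: "Xl k i S'' S = ksign ws S k * cf k i" using h by blast
      show ?thesis unfolding Y_def hv by (subst mult.commute) (rule sp)
    qed
  qed
  then show ?thesis unfolding e .
qed

end

context bw begin

lemma main_comm:
  assumes S'': "S'' \<in> PP" and S: "S \<in> PP"
  shows "mm Dm U S'' S - mm U Dm S'' S - (\<Sum>a\<in>{1..n}. (Var 0 a + Var r (braid_perm ws a)) * Xi a S'' S) \<in> Ide S''"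
proof -
  define X where "X k a = Xl k (cp k a) S'' S" for k a
  define z where "z a j = Var j (cp (Suc j) a)" for a j
  define pi where "pi j a = cf j (cp j a) * kap j" for j a
  have A: "mm Dm U S'' S - mm U Dm S'' S = (\<Sum>a\<in>{1..n}. \<Sum>k\<in>{1..r}. \<Sum>j\<in>{1..<k}. pi j a * X k a - X j a * pi k a)"
    unfolding X_def pi_def by (rule U_comm[OF S'' S])
  define B where "B = (\<Sum>a\<in>{1..n}. \<Sum>k\<in>{1..r}. \<Sum>j\<in>{1..<k}. (z a (j-1) - z a j) * X k a - X j a * (z a (k-1) - z a k))"
  have piz: "pi j a - (z a (j-1) - z a j) \<in> Ide S''" if j: "j \<in> {1..r}" and a: "a \<in> {1..n}" for j a
  proof -
    have "Suc (j - 1) = j" using j by auto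
    then have "z a (j-1) = Var (j-1) (cp j a)" unfolding z_def by simp
    moreover have "z a j = Var j (stran (gi j) (cp j a))" unfolding z_def cp_Suc[OF j] by (rule refl)
    ultimately show ?thesis unfolding pi_def using I7[OF j cp_in[OF a, of j], of S''] by simp
  qed
  have AB: "(\<Sum>a\<in>{1..n}. \<Sum>k\<in>{1..r}. \<Sum>j\<in>{1..<k}. pi j a * X k a - X j a * pi k a) - B \<in> Ide S''"
    unfolding B_def sum_subtractf[symmetric] Ide_def
  proof (intro rm.span_sum)
    fix a k j assume a: "a \<in> {1..n}" and k: "k \<in> {1..r}" and j: "j \<in> {1..<k}"
    then have j': "j \<in> {1..r}" by auto
    have e: "pi j a * X k a - X j a * pi k a - ((z a (j-1) - z a j) * X k a - X j a * (z a (k-1) - z a k))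
       = X k a * (pi j a - (z a (j-1) - z a j)) - X j a * (pi k a - (z a (k-1) - z a k))"
      unfolding gid11 by (rule arg_cong2[where f=minus]) (rule mult.commute, rule refl)
    show "pi j a * X k a - X j a * pi k a - ((z a (j-1) - z a j) * X k a - X j a * (z a (k-1) - z a k)) \<in> rm.span (Gs S'')"
      unfolding e using piz[OF j' a] piz[OF k a] unfolding Ide_def
      by (rule rm.span_diff[OF rm.span_scale rm.span_scale])
  qed
  have B2: "B = (\<Sum>a\<in>{1..n}. \<Sum>k\<in>{1..r}. (z a 0 + z a r - z a (k-1) - z a k) * X k a)"
    unfolding B_def by (rule sum.cong[OF refl]) (rule tel_main)
  have z0: "z a 0 = Var 0 a" for a unfolding z_def using cp_1[of a] by simp
  have zr: "z a r = Var r (braid_perm ws a)" for a unfolding z_def cp_last by (rule refl)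
  have C: "(\<Sum>a\<in>{1..n}. (Var 0 a + Var r (braid_perm ws a)) * Xi a S'' S) = (\<Sum>a\<in>{1..n}. \<Sum>k\<in>{1..r}. (z a 0 + z a r) * X k a)"
    unfolding Xi_def sum_distrib_left z0 zr X_def by (rule refl)
  have D: "B - (\<Sum>a\<in>{1..n}. \<Sum>k\<in>{1..r}. (z a 0 + z a r) * X k a)
     = - (\<Sum>k\<in>{1..r}. \<Sum>a\<in>{1..n}. (Var (k-1) (cp k a) + Var k (cp (Suc k) a)) * Xl k (cp k a) S'' S)"
  proof -
    have "B - (\<Sum>a\<in>{1..n}. \<Sum>k\<in>{1..r}. (z a 0 + z a r) * X k a)
       = (\<Sum>a\<in>{1..n}. \<Sum>k\<in>{1..r}. - ((z a (k-1) + z a k) * X k a))"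
      unfolding B2 sum_subtractf[symmetric] gid12 by (rule refl)
    also have "\<dots> = - (\<Sum>a\<in>{1..n}. \<Sum>k\<in>{1..r}. (z a (k-1) + z a k) * X k a)"
      by (simp only: sum_negf)
    also have "(\<Sum>a\<in>{1..n}. \<Sum>k\<in>{1..r}. (z a (k-1) + z a k) * X k a)
       = (\<Sum>k\<in>{1..r}. \<Sum>a\<in>{1..n}. (z a (k-1) + z a k) * X k a)" by (rule sum.swap)
    also have "\<dots> = (\<Sum>k\<in>{1..r}. \<Sum>a\<in>{1..n}. (Var (k-1) (cp k a) + Var k (cp (Suc k) a)) * Xl k (cp k a) S'' S)"
    proof (intro sum.cong refl)
      fix k a assume k: "k \<in> {1..r}"
      have "Suc (k - 1) = k" using k by auto
      then show "(z a (k-1) + z a k) * X k a = (Var (k-1) (cp k a) + Var k (cp (Suc k) a)) * Xl k (cp k a) S'' S"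
        unfolding z_def X_def by simp
    qed
    finally show ?thesis .
  qed
  have E: "- (\<Sum>k\<in>{1..r}. \<Sum>a\<in>{1..n}. (Var (k-1) (cp k a) + Var k (cp (Suc k) a)) * Xl k (cp k a) S'' S) \<in> Ide S''"
    unfolding Ide_def
  proof (rule rm.span_neg, rule rm.span_sum)
    fix k assume k: "k \<in> {1..r}"
    show "(\<Sum>a\<in>{1..n}. (Var (k-1) (cp k a) + Var k (cp (Suc k) a)) * Xl k (cp k a) S'' S) \<in> rm.span (Gs S'')"
      using perk[OF k, of S'' S] unfolding Ide_def .
  qed
  have F: "mm Dm U S'' S - mm U Dm S'' S - (\<Sum>a\<in>{1..n}. (Var 0 a + Var r (braid_perm ws a)) * Xi a S'' S)
     = ((\<Sum>a\<in>{1..n}. \<Sum>k\<in>{1..r}. \<Sum>j\<in>{1..<k}. pi j a * X k a - X j a * pi k a) - B)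
       + (B - (\<Sum>a\<in>{1..n}. \<Sum>k\<in>{1..r}. (z a 0 + z a r) * X k a))"
    unfolding A C by (rule gid13)
  show ?thesis unfolding F D using AB E unfolding Ide_def by (rule rm.span_add)
qed

end

theorem lemma3p20:
  fixes n :: nat and ws :: "(nat \<times> bool) list"
  assumes "\<forall>x\<in>set ws. 1 \<le> fst x \<and> fst x < n"
  shows "\<exists>u :: op.
    \<forall>S'\<in>Pow {1..length ws}. \<forall>S\<in>Pow {1..length ws}.
      bimod_hom n ws S' S (u S' S)
    \<and> (hdeg ws S' \<noteq> hdeg ws S - 2 \<longrightarrow>
         (\<forall>p. in_ring (length ws) n p \<longrightarrow> u S' S p \<in> term_ideal n ws S'))
    \<and> (\<forall>p k. in_ring (length ws) n p \<longrightarrow> qhomog ws S k p \<longrightarrow>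
         (\<exists>h. in_ring (length ws) n h \<and> qhomog ws S' (k + 4) h
              \<and> u S' S p - h \<in> term_ideal n ws S'))
    \<and> (\<forall>p. in_ring (length ws) n p \<longrightarrow>
         opcomp (length ws) (rdiff ws) u S' S p - opcomp (length ws) u (rdiff ws) S' S p
         - (\<Sum>a\<in>{1..n}. (Var 0 a + Var (length ws) (braid_perm ws a)) * dot_slide ws a S' S p)
         \<in> term_ideal n ws S')"
proof -
  interpret bw n ws by standard (rule assms)
  define u :: op where "u = (\<lambda>S' S p. U S' S * p)"
  have rd: "rdiff ws = (\<lambda>S' S p. Dm S' S * p)" by (rule ext)+ (rule rdiff_eq)
  have ids: "term_ideal n ws T = rm.span (Gs T)" for T unfolding term_ideal_eq Ide_def by (rule refl)
  show ?thesis
  proof (rule exI[of _ u], intro ballI)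
    fix S' S assume S': "S' \<in> PP" and S: "S \<in> PP"
    have bim: "bimod_hom n ws S' S (u S' S)"
      unfolding bimod_hom_def Let_def Ball_def mem_Collect_eq
    proof (intro conjI ballI allI impI)
      fix p assume "in_ring r n p"
      then show "in_ring r n (u S' S p)" unfolding u_def
        using ringM_U unfolding ringM_def by (intro in_ring_mult) auto
    next
      fix p assume "p \<in> term_ideal n ws S"
      then show "u S' S p \<in> term_ideal n ws S'" unfolding u_def term_ideal_eq
        using resp_U unfolding resp_def by blast
    next
      fix p q
      have "U S' S * (p + q) - U S' S * p - U S' S * q = 0" by (simp add: distrib_left)
      then show "u S' S (p + q) - u S' S p - u S' S q \<in> term_ideal n ws S'"
        unfolding u_def ids by (simp add: rm.span_zero)
    next
      fix c p
      have "U S' S * (Const c * p) - Const c * (U S' S * p) = 0" by (subst mult.left_commute) simp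
      then show "u S' S (Const c * p) - Const c * u S' S p \<in> term_ideal n ws S'"
        unfolding u_def ids by (simp add: rm.span_zero)
    next
      fix a p
      have "U S' S * (Var 0 a * p) - Var 0 a * (U S' S * p) = 0" by (subst mult.left_commute) simp
      then show "u S' S (Var 0 a * p) - Var 0 a * u S' S p \<in> term_ideal n ws S'"
        unfolding u_def ids by (simp add: rm.span_zero)
    next
      fix a p
      have "U S' S * (Var r a * p) - Var r a * (U S' S * p) = 0" by (subst mult.left_commute) simp
      then show "u S' S (Var r a * p) - Var r a * u S' S p \<in> term_ideal n ws S'"
        unfolding u_def ids by (simp add: rm.span_zero)
    qed
    have hd: "hdeg ws S' \<noteq> hdeg ws S - 2 \<longrightarrow> (\<forall>p. in_ring r n p \<longrightarrow> u S' S p \<in> term_ideal n ws S')"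
    proof (intro impI allI)
      fix p assume h: "hdeg ws S' \<noteq> hdeg ws S - 2"
      have "U S' S = 0" using hgood_U h unfolding hgood_def by force
      then show "u S' S p \<in> term_ideal n ws S'" unfolding u_def ids by (simp add: rm.span_zero)
    qed
    have qh: "\<forall>p k. in_ring r n p \<longrightarrow> qhomog ws S k p \<longrightarrow>
         (\<exists>h. in_ring r n h \<and> qhomog ws S' (k + 4) h \<and> u S' S p - h \<in> term_ideal n ws S')"
    proof (intro allI impI)
      fix p k assume p: "in_ring r n p" and q: "qhomog ws S k p"
      show "\<exists>h. in_ring r n h \<and> qhomog ws S' (k + 4) h \<and> u S' S p - h \<in> term_ideal n ws S'"
      proof (intro exI conjI)
        show "in_ring r n (U S' S * p)" using ringM_U p unfolding ringM_def by (intro in_ring_mult) auto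
        show "u S' S p - U S' S * p \<in> term_ideal n ws S'" unfolding u_def ids by (simp add: rm.span_zero)
        show "qhomog ws S' (k + 4) (U S' S * p)" unfolding qhomog_def
        proof
          fix m assume "m \<in> Poly_Mapping.keys (U S' S * p)"
          then have "m \<in> {a + b | a b. a \<in> Poly_Mapping.keys (U S' S) \<and> b \<in> Poly_Mapping.keys p}"
            using keys_mult[of "U S' S" p] by (rule subsetD[rotated])
          then obtain a b where ab: "m = a + b" "a \<in> Poly_Mapping.keys (U S' S)" "b \<in> Poly_Mapping.keys p"
            by (elim CollectE exE conjE)
          have "2 * int (mdeg a) + qshift ws S' = qshift ws S + 4" using qgood_U ab(2) unfolding qgood_def by blast
          moreover have "2 * int (mdeg b) + qshift ws S = k" using q ab(3) unfolding qhomog_def by blast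
          ultimately show "2 * int (mdeg m) + qshift ws S' = k + 4" unfolding ab(1) mdeg_add by simp
        qed
      qed
    qed
    have cm: "\<forall>p. in_ring r n p \<longrightarrow>
         opcomp r (rdiff ws) u S' S p - opcomp r u (rdiff ws) S' S p
         - (\<Sum>a\<in>{1..n}. (Var 0 a + Var r (braid_perm ws a)) * dot_slide ws a S' S p)
         \<in> term_ideal n ws S'"
    proof (intro allI impI)
      fix p
      let ?E = "mm Dm U S' S - mm U Dm S' S - (\<Sum>a\<in>{1..n}. (Var 0 a + Var r (braid_perm ws a)) * Xi a S' S)"
      have s: "(\<Sum>a\<in>{1..n}. (Var 0 a + Var r (braid_perm ws a)) * (Xi a S' S * p))
          = (\<Sum>a\<in>{1..n}. (Var 0 a + Var r (braid_perm ws a)) * Xi a S' S) * p"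
        unfolding sum_distrib_right by (rule sum.cong[OF refl]) (rule mult.assoc[symmetric])
      have e: "opcomp r (rdiff ws) u S' S p - opcomp r u (rdiff ws) S' S p
         - (\<Sum>a\<in>{1..n}. (Var 0 a + Var r (braid_perm ws a)) * dot_slide ws a S' S p) = p * ?E"
        unfolding rd u_def opcomp_eq dot_slide_eq s left_diff_distrib[symmetric] by (rule mult.commute)
      have "?E \<in> Ide S'" by (rule main_comm[OF S' S])
      then show "opcomp r (rdiff ws) u S' S p - opcomp r u (rdiff ws) S' S p
         - (\<Sum>a\<in>{1..n}. (Var 0 a + Var r (braid_perm ws a)) * dot_slide ws a S' S p) \<in> term_ideal n ws S'"
        unfolding e term_ideal_eq Ide_def by (rule rm.span_scale)
    qed
    show "bimod_hom n ws S' S (u S' S) \<and> (hdeg ws S' \<noteq> hdeg ws S - 2 \<longrightarrow>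
         (\<forall>p. in_ring r n p \<longrightarrow> u S' S p \<in> term_ideal n ws S')) \<and>
       (\<forall>p k. in_ring r n p \<longrightarrow> qhomog ws S k p \<longrightarrow>
         (\<exists>h. in_ring r n h \<and> qhomog ws S' (k + 4) h \<and> u S' S p - h \<in> term_ideal n ws S')) \<and>
       (\<forall>p. in_ring r n p \<longrightarrow>
         opcomp r (rdiff ws) u S' S p - opcomp r u (rdiff ws) S' S p
         - (\<Sum>a\<in>{1..n}. (Var 0 a + Var r (braid_perm ws a)) * dot_slide ws a S' S p)
         \<in> term_ideal n ws S')"
      using bim hd qh cm by blast
  qed
qed


end
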